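(* For all $0\le\varepsilon\le x\le1$ with $x>0$, $\Delta(\varepsilon)\le \frac{\Delta(x)}{x}\,\varepsilon$. In particular $\Delta(\varepsilon)\le\varepsilon$ for all $0\le\varepsilon\le1$.
   Context: Let $\lambda$ denote Lebesgue measure on $\mathbb{R}$. A set $C\subseteq\mathbb{R}$ is symmetric if there is a number $c$ such that $c+x\in C$ if and only if $c-x\in C$. For a measurable $A\subseteq\mathbb{R}$ let $D(A):=\sup\{\lambda(C): C\subseteq A,\ C \text{ measurable and symmetric}\}$. For $0\le\varepsilon\le1$ let $\Delta(\varepsilon):=\inf\{D(A): A\subseteq[0,1) \text{ measurable},\ \lambda(A)=\varepsilon\}$. *)

theory Defs
  imports "HOL-Analysis.Analysis"
begin

definition symmetric_set :: "real set \<Rightarrow> bool" where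
  "symmetric_set C \<longleftrightarrow> (\<exists>c. \<forall>x. c + x \<in> C \<longleftrightarrow> c - x \<in> C)"

text \<open>D(A): supremum of Lebesgue measures of measurable symmetric subsets of A.
  (Used only for A a subset of [0,1), where this set of reals is bounded and nonempty.)\<close>
definition D :: "real set \<Rightarrow> real" where
  "D A = Sup {measure lebesgue C | C. C \<subseteq> A \<and> C \<in> sets lebesgue \<and> symmetric_set C}"

definition Delta :: "real \<Rightarrow> real" where
  "Delta \<epsilon> = Inf {D A | A. A \<subseteq> {0..<1} \<and> A \<in> sets lebesgue \<and> measure lebesgue A = \<epsilon>}"

end

theory Submission
  imports Defs
begin

lemma scale_meas:
  fixes t :: real
  assumes "t \<noteq> 0" "S \<in> sets lebesgue"
  shows "(\<lambda>y. t*y) ` S \<in> sets lebesgue"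
    and "measure lebesgue ((\<lambda>y. t*y) ` S) = \<bar>t\<bar> * measure lebesgue S"
proof -
  have "(\<lambda>y. t*y) ` S = ((*\<^sub>R) (1/t)) -` S \<inter> space lebesgue"
    using assms(1) by (auto simp: image_iff) (metis nonzero_mult_div_cancel_left times_divide_eq_right mult.commute)
  then show "(\<lambda>y. t*y) ` S \<in> sets lebesgue"
    using measurable_sets[OF lebesgue_measurable_scaling[of "1/t"] assms(2)] by simp
  have "(\<lambda>y. t*y) ` S = (\<lambda>x. t *\<^sub>R x + 0) ` S" by simp
  then show "measure lebesgue ((\<lambda>y. t*y) ` S) = \<bar>t\<bar> * measure lebesgue S"
    using measure_lebesgue_affine[of t 0 S] by simp
qed

lemma sym_scale:
  fixes s :: real
  assumes "s \<noteq> 0" "symmetric_set C"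
  shows "symmetric_set ((\<lambda>y. s*y) ` C)"
proof -
  obtain c where c: "\<And>x. c + x \<in> C \<longleftrightarrow> c - x \<in> C" using assms(2) unfolding symmetric_set_def by blast
  have mem: "z \<in> (\<lambda>y. s*y) ` C \<longleftrightarrow> z / s \<in> C" for z
    using assms(1) by (auto simp: image_iff) (metis nonzero_mult_div_cancel_left times_divide_eq_right mult.commute)
  have "s*c + x \<in> (\<lambda>y. s*y) ` C \<longleftrightarrow> s*c - x \<in> (\<lambda>y. s*y) ` C" for x
  proof -
    have e1: "(s*c + x)/s = c + x/s" "(s*c - x)/s = c - x/s" using assms(1) by (auto simp: field_simps)
    show ?thesis unfolding mem e1 using c by blast
  qed
  then show ?thesis unfolding symmetric_set_def by blast
qed

lemma sub_unit_measure:
  assumes "C \<subseteq> {0..<1::real}" "C \<in> sets lebesgue"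
  shows "measure lebesgue C \<le> 1"
proof -
  have "measure lebesgue C \<le> measure lebesgue {0..1::real}"
    by (rule measure_mono_fmeasurable) (use assms in auto)
  then show ?thesis by simp
qed

lemma D_facts:
  assumes "A \<subseteq> {0..<1::real}"
  shows "bdd_above {measure lebesgue C | C. C \<subseteq> A \<and> C \<in> sets lebesgue \<and> symmetric_set C}"
    and "{measure lebesgue C | C. C \<subseteq> A \<and> C \<in> sets lebesgue \<and> symmetric_set C} \<noteq> {}"
    and "\<And>C. C \<subseteq> A \<Longrightarrow> C \<in> sets lebesgue \<Longrightarrow> symmetric_set C \<Longrightarrow> measure lebesgue C \<le> D A"
    and "0 \<le> D A" and "D A \<le> 1"
proof -
  show bdd: "bdd_above {measure lebesgue C | C. C \<subseteq> A \<and> C \<in> sets lebesgue \<and> symmetric_set C}"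
    unfolding bdd_above_def
  proof (intro exI[of _ 1] ballI)
    fix m assume "m \<in> {measure lebesgue C | C. C \<subseteq> A \<and> C \<in> sets lebesgue \<and> symmetric_set C}"
    then obtain C where "m = measure lebesgue C" "C \<subseteq> A" "C \<in> sets lebesgue" by blast
    then show "m \<le> 1" using assms sub_unit_measure[of C] by simp
  qed
  have e: "symmetric_set {}" unfolding symmetric_set_def by simp
  show ne: "{measure lebesgue C | C. C \<subseteq> A \<and> C \<in> sets lebesgue \<and> symmetric_set C} \<noteq> {}"
    using e by blast
  show le: "\<And>C. C \<subseteq> A \<Longrightarrow> C \<in> sets lebesgue \<Longrightarrow> symmetric_set C \<Longrightarrow> measure lebesgue C \<le> D A"
    unfolding D_def by (rule cSup_upper[OF _ bdd]) blast
  show "0 \<le> D A" using le[of "{}"] e by simp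
  show "D A \<le> 1" unfolding D_def
  proof (rule cSup_least[OF ne])
    fix m assume "m \<in> {measure lebesgue C | C. C \<subseteq> A \<and> C \<in> sets lebesgue \<and> symmetric_set C}"
    then obtain C where "m = measure lebesgue C" "C \<subseteq> A" "C \<in> sets lebesgue" by blast
    then show "m \<le> 1" using assms sub_unit_measure[of C] by simp
  qed
qed

lemma D_scale:
  fixes t :: real
  assumes "0 < t" "A \<subseteq> {0..<1}"
  shows "D ((\<lambda>y. t*y) ` A) \<le> t * D A"
  unfolding D_def[of "(\<lambda>y. t*y) ` A"]
proof (rule cSup_least)
  have e: "symmetric_set {}" unfolding symmetric_set_def by simp
  then show "{measure lebesgue C | C. C \<subseteq> (\<lambda>y. t*y) ` A \<and> C \<in> sets lebesgue \<and> symmetric_set C} \<noteq> {}"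
    by blast
  fix m assume "m \<in> {measure lebesgue C | C. C \<subseteq> (\<lambda>y. t*y) ` A \<and> C \<in> sets lebesgue \<and> symmetric_set C}"
  then obtain C where C: "m = measure lebesgue C" "C \<subseteq> (\<lambda>y. t*y) ` A" "C \<in> sets lebesgue" "symmetric_set C"
    by blast
  let ?C = "(\<lambda>y. (1/t)*y) ` C"
  have sub: "?C \<subseteq> A" using C(2) assms(1) by auto
  have "measure lebesgue ?C = measure lebesgue C / t"
    using scale_meas(2)[of "1/t" C] C(3) assms(1) by simp
  moreover have "measure lebesgue ?C \<le> D A"
    using D_facts(3)[OF assms(2) sub] scale_meas(1)[of "1/t" C] C(3,4) sym_scale[of "1/t" C] assms(1) by simp
  ultimately have "m / t \<le> D A" using C(1) by simp
  then show "m \<le> t * D A" using assms(1) by (simp add: field_simps)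
qed

lemma Delta_facts:
  shows "bdd_below {D A | A. A \<subseteq> {0..<1} \<and> A \<in> sets lebesgue \<and> measure lebesgue A = e}"
    and "A \<subseteq> {0..<1} \<Longrightarrow> A \<in> sets lebesgue \<Longrightarrow> measure lebesgue A = e \<Longrightarrow> Delta e \<le> D A"
proof -
  show bdd: "bdd_below {D A | A. A \<subseteq> {0..<1} \<and> A \<in> sets lebesgue \<and> measure lebesgue A = e}"
    unfolding bdd_below_def
  proof (intro exI[of _ 0] ballI)
    fix m assume "m \<in> {D A | A. A \<subseteq> {0..<1} \<and> A \<in> sets lebesgue \<and> measure lebesgue A = e}"
    then obtain A where "m = D A" "A \<subseteq> {0..<1}" by blast
    then show "0 \<le> m" using D_facts(4)[of A] by simp
  qed
  show "A \<subseteq> {0..<1} \<Longrightarrow> A \<in> sets lebesgue \<Longrightarrow> measure lebesgue A = e \<Longrightarrow> Delta e \<le> D A"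
    unfolding Delta_def by (rule cInf_lower[OF _ bdd]) blast
qed

lemma part1:
  fixes e x :: real
  assumes "0 \<le> e" "e \<le> x" "x \<le> 1" "0 < x"
  shows "Delta e \<le> Delta x / x * e"
proof (cases "e = 0")
  case True
  have "symmetric_set {}" unfolding symmetric_set_def by simp
  then have "{measure lebesgue C | C. C \<subseteq> {} \<and> C \<in> sets lebesgue \<and> symmetric_set C} = {0}" by auto
  then have "D {} \<le> 0" unfolding D_def by simp
  then have "Delta 0 \<le> 0" using Delta_facts(2)[of "{}" 0] by simp
  then show ?thesis using True by simp
next
  case False
  define t where "t = e / x"
  have t: "0 < t" "t \<le> 1" using assms False by (auto simp: t_def)
  have "Delta e / t \<le> Delta x"
    unfolding Delta_def[of x]
  proof (rule cInf_greatest)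
    show "{D A | A. A \<subseteq> {0..<1} \<and> A \<in> sets lebesgue \<and> measure lebesgue A = x} \<noteq> {}"
    proof -
      have "{0..<x} \<subseteq> {0..<1}" using assms by auto
      moreover have "measure lebesgue {0..<x} = x" using assms by simp
      moreover have "{0..<x} \<in> sets lebesgue" by simp
      ultimately have "D {0..<x} \<in> {D A | A. A \<subseteq> {0..<1} \<and> A \<in> sets lebesgue \<and> measure lebesgue A = x}"
        by blast
      then show ?thesis by blast
    qed
    fix d assume "d \<in> {D A | A. A \<subseteq> {0..<1} \<and> A \<in> sets lebesgue \<and> measure lebesgue A = x}"
    then obtain A where A: "d = D A" "A \<subseteq> {0..<1}" "A \<in> sets lebesgue" "measure lebesgue A = x" by blast
    have sub: "(\<lambda>y. t*y) ` A \<subseteq> {0..<1}"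
    proof
      fix z assume "z \<in> (\<lambda>y. t*y) ` A"
      then obtain y where "y \<in> A" "z = t*y" by blast
      with A(2) have y: "0 \<le> y" "y < 1" by auto
      have "t * y \<le> 1 * y" using t y by (intro mult_right_mono) auto
      with y t \<open>z = t*y\<close> show "z \<in> {0..<1}" by auto
    qed
    have m: "measure lebesgue ((\<lambda>y. t*y) ` A) = e"
    proof -
      have "measure lebesgue ((\<lambda>y. t*y) ` A) = t * x" using scale_meas(2)[of t A] A t by simp
      also have "\<dots> = e" using assms(4) by (simp add: t_def)
      finally show ?thesis .
    qed
    have "Delta e \<le> D ((\<lambda>y. t*y) ` A)"
      using Delta_facts(2)[OF sub scale_meas(1)[of t A] m] t A by simp
    also have "\<dots> \<le> t * D A" using D_scale[OF t(1) A(2)] .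
    finally show "Delta e / t \<le> d" using t A(1) by (simp add: field_simps)
  qed
  then have "Delta e \<le> t * Delta x" using t by (simp add: field_simps)
  then show ?thesis by (simp add: t_def mult.commute)
qed

theorem lemma2p3:
  shows "(\<forall>\<epsilon> x::real. 0 \<le> \<epsilon> \<and> \<epsilon> \<le> x \<and> x \<le> 1 \<and> 0 < x \<longrightarrow> Delta \<epsilon> \<le> Delta x / x * \<epsilon>)
         \<and> (\<forall>\<epsilon>::real. 0 \<le> \<epsilon> \<and> \<epsilon> \<le> 1 \<longrightarrow> Delta \<epsilon> \<le> \<epsilon>)"
proof (intro conjI allI impI)
  fix e x :: real assume "0 \<le> e \<and> e \<le> x \<and> x \<le> 1 \<and> 0 < x"
  then show "Delta e \<le> Delta x / x * e" using part1 by blast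
next
  fix e :: real assume a: "0 \<le> e \<and> e \<le> 1"
  have "Delta 1 \<le> D {0..<1}" using Delta_facts(2)[of "{0..<1}" 1] by simp
  also have "\<dots> \<le> 1" using D_facts(5) by simp
  finally have "Delta 1 \<le> 1" .
  then have "Delta 1 * e \<le> e" using a mult_right_mono[of "Delta 1" 1 e] by simp
  then show "Delta e \<le> e" using part1[of e 1] a by simp
qed

end
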